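(* Let $D$ be a strongly connected digraph with girth $g$ (having at least one cycle), and let $T$ be a DFS tree of $D$ rooted at $r$, of length $t$, with levels $V_0,\ldots,V_t$. Then for each $h$ with $0\le h\le t-g+2$, the set $W_h=\bigcup_{i=0}^{g-2}V_{h+i}$ induces an acyclic subdigraph of $D$, and there is no backward arc with both ends in $W_h$.
   Context: Digraphs are finite and loopless; paths and cycles are directed; $l(\cdot)$ denotes length. Girth is the length of a shortest directed cycle. A DFS tree $T$ of a strongly connected digraph $D$ rooted at $r$ is the spanning out-branching produced by a depth-first search started at $r$. $P_u$ is the unique $ru$-path in $T$; the length $t$ of $T$ is the length of a longest path in $T$; the levels are $V_i=\{u: l(P_u)=i\}$, $0\le i\le t$. An arc $(u,v)$ is a backward arc if $T$ contains a $vu$-path. *)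

theory Defs
  imports Main
begin

definition digraph :: "'a set \<Rightarrow> ('a \<times> 'a) set \<Rightarrow> bool" where
  "digraph V A \<longleftrightarrow> finite V \<and> A \<subseteq> V \<times> V \<and> (\<forall>v. (v, v) \<notin> A)"

definition strongly_connected :: "'a set \<Rightarrow> ('a \<times> 'a) set \<Rightarrow> bool" where
  "strongly_connected V A \<longleftrightarrow> (\<forall>u\<in>V. \<forall>v\<in>V. (u, v) \<in> A\<^sup>*)"

definition is_cycle :: "('a \<times> 'a) set \<Rightarrow> 'a list \<Rightarrow> bool" where
  "is_cycle A c \<longleftrightarrow> length c \<ge> 2 \<and> distinct c \<and>
     (\<forall>i < length c. (c ! i, c ! ((i + 1) mod length c)) \<in> A)"

definition girth :: "('a \<times> 'a) set \<Rightarrow> nat" where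
  "girth A = (LEAST k. \<exists>c. is_cycle A c \<and> length c = k)"

definition induces_acyclic :: "('a \<times> 'a) set \<Rightarrow> 'a set \<Rightarrow> bool" where
  "induces_acyclic A W \<longleftrightarrow> \<not> (\<exists>c. is_cycle A c \<and> set c \<subseteq> W)"

text \<open>Depth-first search: states are (stack, visited set, tree arcs).\<close>
inductive dfs_step :: "('a \<times> 'a) set \<Rightarrow> ('a list \<times> 'a set \<times> ('a \<times> 'a) set)
     \<Rightarrow> ('a list \<times> 'a set \<times> ('a \<times> 'a) set) \<Rightarrow> bool" for A where
  push: "(u, v) \<in> A \<Longrightarrow> v \<notin> X \<Longrightarrow>
     dfs_step A (u # s, X, T) (v # u # s, insert v X, insert (u, v) T)"
| pop: "(\<forall>v. (u, v) \<in> A \<longrightarrow> v \<in> X) \<Longrightarrow> dfs_step A (u # s, X, T) (s, X, T)"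

definition dfs_tree :: "'a set \<Rightarrow> ('a \<times> 'a) set \<Rightarrow> 'a \<Rightarrow> ('a \<times> 'a) set \<Rightarrow> bool" where
  "dfs_tree V A r T \<longleftrightarrow> r \<in> V \<and>
     (\<exists>X. (dfs_step A)\<^sup>*\<^sup>* ([r], {r}, {}) ([], X, T))"

text \<open>Level i of T: vertices u whose tree path P_u from r has length i
  (in an out-branching, walks in T from r are exactly the paths P_u).\<close>
definition level :: "('a \<times> 'a) set \<Rightarrow> 'a \<Rightarrow> nat \<Rightarrow> 'a set" where
  "level T r i = {u. (r, u) \<in> T ^^ i}"

text \<open>Length of T: the length of a longest path in T (= the largest nonempty level).\<close>
definition tree_length :: "('a \<times> 'a) set \<Rightarrow> 'a \<Rightarrow> nat" where
  "tree_length T r = Max {i. level T r i \<noteq> {}}"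

definition backward_arc :: "('a \<times> 'a) set \<Rightarrow> ('a \<times> 'a) set \<Rightarrow> 'a \<times> 'a \<Rightarrow> bool" where
  "backward_arc A T e \<longleftrightarrow> e \<in> A \<and> (snd e, fst e) \<in> T\<^sup>*"

end

theory Submission
  imports Defs
begin


fun tchain :: "('a \<times> 'a) set \<Rightarrow> 'a list \<Rightarrow> bool" where
  "tchain T (x # y # s) = ((y, x) \<in> T \<and> tchain T (y # s))"
| "tchain T _ = True"

fun idx :: "'a \<Rightarrow> 'a list \<Rightarrow> nat" where
  "idx x [] = 0"
| "idx x (y # ys) = (if x = y then 0 else Suc (idx x ys))"

lemma tchain_mono: "tchain T s \<Longrightarrow> T \<subseteq> T' \<Longrightarrow> tchain T' s"
  by (induction T s rule: tchain.induct) auto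

lemma tchain_tl: "tchain T (u # s) \<Longrightarrow> tchain T s"
  by (cases s) auto

lemma tchain_anc: "tchain T (u # s) \<Longrightarrow> v \<in> set s \<Longrightarrow> (v, u) \<in> T\<^sup>*"
proof (induction s arbitrary: u)
  case Nil then show ?case by simp
next
  case (Cons y s)
  then have "(y, u) \<in> T" "tchain T (y # s)" by auto
  show ?case
  proof (cases "v = y")
    case True then show ?thesis using \<open>(y,u) \<in> T\<close> by auto
  next
    case False
    then have "(v, y) \<in> T\<^sup>*" using Cons by auto
    then show ?thesis using \<open>(y,u) \<in> T\<close> by (meson rtrancl.rtrancl_into_rtrancl)
  qed
qed

definition dinv :: "('a \<times> 'a) set \<Rightarrow> 'a \<Rightarrow> 'a list \<Rightarrow> 'a set \<Rightarrow> ('a \<times> 'a) set \<Rightarrow> 'a list \<Rightarrow> bool" where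
  "dinv A r s X T F \<longleftrightarrow> X = set s \<union> set F \<and> tchain T s \<and> T \<subseteq> A \<and> T \<subseteq> X \<times> X \<and> r \<in> X
    \<and> (\<forall>x x' y. (x,y)\<in>T \<longrightarrow> (x',y)\<in>T \<longrightarrow> x=x') \<and> (\<forall>x. (x,r)\<notin>T)
    \<and> distinct s \<and> set s \<inter> set F = {}
    \<and> (\<forall>u v. (u,v)\<in>A \<longrightarrow> u\<in>set F \<longrightarrow> (v,u)\<in>T\<^sup>* \<or> (v\<in>set F \<and> idx u F < idx v F))"

lemma dinvI:
  assumes "X = set s \<union> set F" "tchain T s" "T \<subseteq> A" "T \<subseteq> X \<times> X" "r \<in> X"
    "\<forall>x x' y. (x,y)\<in>T \<longrightarrow> (x',y)\<in>T \<longrightarrow> x=x'" "\<forall>x. (x,r)\<notin>T"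
    "distinct s" "set s \<inter> set F = {}"
    "\<forall>u v. (u,v)\<in>A \<longrightarrow> u\<in>set F \<longrightarrow> (v,u)\<in>T\<^sup>* \<or> (v\<in>set F \<and> idx u F < idx v F)"
  shows "dinv A r s X T F"
  using assms unfolding dinv_def by blast

lemma dinvD:
  assumes "dinv A r s X T F"
  shows "X = set s \<union> set F" "tchain T s" "T \<subseteq> A" "T \<subseteq> X \<times> X" "r \<in> X"
    "\<forall>x x' y. (x,y)\<in>T \<longrightarrow> (x',y)\<in>T \<longrightarrow> x=x'" "\<forall>x. (x,r)\<notin>T"
    "distinct s" "set s \<inter> set F = {}"
    "\<forall>u v. (u,v)\<in>A \<longrightarrow> u\<in>set F \<longrightarrow> (v,u)\<in>T\<^sup>* \<or> (v\<in>set F \<and> idx u F < idx v F)"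
  using assms unfolding dinv_def by blast+

lemma inv_step:
  assumes "dfs_step A st st'" "dinv A r (fst st) (fst (snd st)) (snd (snd st)) F"
    and loopless: "\<forall>v. (v,v) \<notin> A"
  shows "\<exists>F'. dinv A r (fst st') (fst (snd st')) (snd (snd st')) F'"
  using assms(1)
proof cases
  case (push u v X s T)
  have I: "dinv A r (u#s) X T F" using assms(2) push(1) by simp
  note D = dinvD[OF I]
  have vX: "v \<notin> X" by fact
  have ru: "(x, v) \<notin> T" for x using D(4) vX by blast
  have "dinv A r (v # u # s) (insert v X) (insert (u, v) T) F"
  proof (rule dinvI)
    show "insert v X = set (v # u # s) \<union> set F" using D(1) by simp
    show "tchain (insert (u, v) T) (v # u # s)"
      using D(2) tchain_mono[of T "u#s" "insert (u,v) T"] by auto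
    show "insert (u, v) T \<subseteq> A" using D(3) push(3) by blast
    show "insert (u, v) T \<subseteq> insert v X \<times> insert v X" using D(4) D(1) by auto
    show "r \<in> insert v X" using D(5) by blast
    show "\<forall>x x' y. (x,y)\<in>insert (u, v) T \<longrightarrow> (x',y)\<in>insert (u, v) T \<longrightarrow> x=x'"
      using D(6) ru by blast
    show "\<forall>x. (x,r)\<notin>insert (u, v) T" using D(7) D(5) vX by blast
    show "distinct (v # u # s)" using D(8) D(1) vX by simp
    show "set (v # u # s) \<inter> set F = {}" using D(9) D(1) vX by auto
    show "\<forall>u' v'. (u',v')\<in>A \<longrightarrow> u'\<in>set F \<longrightarrow> (v',u')\<in>(insert (u, v) T)\<^sup>* \<or> (v'\<in>set F \<and> idx u' F < idx v' F)"
      using D(10) rtrancl_mono[of T "insert (u,v) T"] by blast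
  qed
  then show ?thesis using push by auto
next
  case (pop u X s T)
  have I: "dinv A r (u#s) X T F" using assms(2) pop(1) by simp
  note D = dinvD[OF I]
  have uF: "u \<notin> set F" using D(9) by auto
  have "dinv A r s X T (u # F)"
  proof (rule dinvI)
    show "X = set s \<union> set (u # F)" using D(1) by auto
    show "tchain T s" by (rule tchain_tl[OF D(2)])
    show "T \<subseteq> A" by (rule D(3))
    show "T \<subseteq> X \<times> X" by (rule D(4))
    show "r \<in> X" by (rule D(5))
    show "\<forall>x x' y. (x,y)\<in>T \<longrightarrow> (x',y)\<in>T \<longrightarrow> x=x'" by (rule D(6))
    show "\<forall>x. (x,r)\<notin>T" by (rule D(7))
    show "distinct s" using D(8) by simp
    show "set s \<inter> set (u # F) = {}" using D(8) D(9) by auto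
    show "\<forall>u' v'. (u',v')\<in>A \<longrightarrow> u'\<in>set (u#F) \<longrightarrow> (v',u')\<in>T\<^sup>* \<or> (v'\<in>set (u#F) \<and> idx u' (u#F) < idx v' (u#F))"
    proof (intro allI impI)
      fix u' v' assume a: "(u',v') \<in> A" "u' \<in> set (u#F)"
      have nl: "u' \<noteq> v'" using a loopless by auto
      show "(v',u')\<in>T\<^sup>* \<or> (v'\<in>set (u#F) \<and> idx u' (u#F) < idx v' (u#F))"
      proof (cases "u' = u")
        case True
        then have "v' \<in> X" using pop a by auto
        then have "v' \<in> set s \<or> v' \<in> set F" using D(1) nl True by auto
        then show ?thesis
        proof
          assume "v' \<in> set s"
          then show ?thesis using tchain_anc[of T u s v'] D(2) True by auto
        next
          assume "v' \<in> set F" then show ?thesis using True nl by auto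
        qed
      next
        case False
        then have "u' \<in> set F" using a by auto
        then have "(v',u')\<in>T\<^sup>* \<or> (v'\<in>set F \<and> idx u' F < idx v' F)"
          using D(10) a by blast
        then show ?thesis using False uF by auto
      qed
    qed
  qed
  then show ?thesis using pop by auto
qed

lemma inv_run:
  assumes "(dfs_step A)\<^sup>*\<^sup>* ([r], {r}, {}) st" and loopless: "\<forall>v. (v,v) \<notin> A"
  shows "\<exists>F. dinv A r (fst st) (fst (snd st)) (snd (snd st)) F"
  using assms(1)
proof (induction rule: rtranclp_induct)
  case base
  have "dinv A r [r] {r} {} []" unfolding dinv_def by auto
  then show ?case by auto
next
  case (step y z)
  then obtain F where "dinv A r (fst y) (fst (snd y)) (snd (snd y)) F" by blast
  from inv_step[OF step(2) this loopless] show ?case .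
qed



lemma depth_unique:
  assumes up: "\<forall>x x' y. (x,y)\<in>T \<longrightarrow> (x',y)\<in>T \<longrightarrow> x=x'" and nr: "\<forall>x. (x,r)\<notin>T"
  shows "(r,u)\<in>T^^i \<Longrightarrow> (r,u)\<in>T^^j \<Longrightarrow> i=j"
proof (induction i arbitrary: u j)
  case 0
  then show ?case using nr by (cases j) auto
next
  case (Suc i)
  then obtain p where p: "(r,p)\<in>T^^i" "(p,u)\<in>T" by auto
  show ?case
  proof (cases j)
    case 0 then show ?thesis using Suc p nr by auto
  next
    case (Suc j')
    then obtain q where q: "(r,q)\<in>T^^j'" "(q,u)\<in>T" using Suc.prems by auto
    have "q = p" using up p q by blast
    then show ?thesis using Suc.IH p q Suc by auto
  qed
qed

lemma back_cycle:
  assumes TA: "T \<subseteq> A"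
    and du: "\<And>u i j. (r,u)\<in>T^^i \<Longrightarrow> (r,u)\<in>T^^j \<Longrightarrow> i=j"
    and rv: "(r,v)\<in>T^^a" and vu: "(v,u)\<in>T^^d" and uv: "(u,v)\<in>A" and ne: "u \<noteq> v"
  shows "\<exists>c. is_cycle A c \<and> length c = Suc d"
proof -
  obtain f where f: "f 0 = v" "f d = u" "\<forall>i<d. (f i, f (Suc i)) \<in> T"
    using vu relpow_fun_conv by metis
  have d0: "d > 0" using f ne by (cases d) auto
  have fi: "(v, f i) \<in> T^^i" if "i \<le> d" for i
    using that proof (induction i)
    case 0 then show ?case using f by simp
  next
    case (Suc i) then show ?case using f by auto
  qed
  have rf: "(r, f i) \<in> T^^(a+i)" if "i \<le> d" for i
    using fi[OF that] rv relpow_add by blast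
  have inj: "inj_on f {0..<Suc d}"
  proof (rule inj_onI)
    fix i j assume "i \<in> {0..<Suc d}" "j \<in> {0..<Suc d}" "f i = f j"
    then show "i = j" using rf[of i] rf[of j] du by fastforce
  qed
  define c where "c = map f [0..<Suc d]"
  have "is_cycle A c" unfolding is_cycle_def
  proof (intro conjI allI impI)
    show "2 \<le> length c" using d0 c_def by simp
    show "distinct c" using inj c_def by (simp add: distinct_map del: upt_Suc)
    fix i assume i: "i < length c"
    show "(c ! i, c ! ((i + 1) mod length c)) \<in> A"
    proof (cases "i < d")
      case True
      then show ?thesis using f TA c_def i by (auto simp del: upt_Suc)
    next
      case False
      then have "i = d" using i c_def by simp
      then show ?thesis using f uv c_def by (simp del: upt_Suc)
    qed
  qed
  then show ?thesis using c_def by auto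
qed



theorem mainTheorem13:
  fixes V :: "'a set" and A :: "('a \<times> 'a) set" and r :: 'a and T :: "('a \<times> 'a) set"
  assumes "digraph V A"
    and "strongly_connected V A"
    and "\<exists>c. is_cycle A c"
    and "dfs_tree V A r T"
    and "h + girth A \<le> tree_length T r + 2"
  shows "induces_acyclic A (\<Union>i\<in>{0..girth A - 2}. level T r (h + i))
     \<and> \<not> (\<exists>u v. backward_arc A T (u, v) \<and>
            u \<in> (\<Union>i\<in>{0..girth A - 2}. level T r (h + i)) \<and>
            v \<in> (\<Union>i\<in>{0..girth A - 2}. level T r (h + i)))"
proof -
  have loopless: "\<forall>v. (v,v) \<notin> A" using assms(1) unfolding digraph_def by auto
  obtain X where run: "(dfs_step A)\<^sup>*\<^sup>* ([r], {r}, {}) ([], X, T)"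
    using assms(4) unfolding dfs_tree_def by auto
  obtain F where I: "dinv A r [] X T F" using inv_run[OF run loopless] by auto
  have XF: "X = set F" and TA: "T \<subseteq> A" and TX: "T \<subseteq> X \<times> X" and rX: "r \<in> X"
    and up: "\<forall>x x' y. (x,y)\<in>T \<longrightarrow> (x',y)\<in>T \<longrightarrow> x=x'" and nr: "\<forall>x. (x,r)\<notin>T"
    and key: "\<forall>u v. (u,v)\<in>A \<longrightarrow> u\<in>set F \<longrightarrow> (v,u)\<in>T\<^sup>* \<or> (v\<in>set F \<and> idx u F < idx v F)"
    using I unfolding dinv_def by auto
  have reach: "(r,u)\<in>T^^i \<Longrightarrow> u \<in> set F" for u i
  proof (induction i arbitrary: u)
    case 0 then show ?case using rX XF by simp
  next
    case (Suc i) then show ?case using TX XF by auto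
  qed
  have du: "\<And>u i j. (r,u)\<in>T^^i \<Longrightarrow> (r,u)\<in>T^^j \<Longrightarrow> i=j"
    using depth_unique[OF up nr] by blast
  define g where "g = girth A"
  obtain c0 where c0: "is_cycle A c0" using assms(3) by auto
  have gex: "\<exists>c. is_cycle A c \<and> length c = g"
    unfolding g_def girth_def by (rule LeastI_ex) (use c0 in auto)
  have g2: "g \<ge> 2" using gex unfolding is_cycle_def by auto
  have gle: "g \<le> length c" if "is_cycle A c" for c
    unfolding g_def girth_def by (rule Least_le) (use that in auto)
  define W where "W = (\<Union>i\<in>{0..g - 2}. level T r (h + i))"
  have memW: "x \<in> W \<longleftrightarrow> (\<exists>i\<le>g-2. (r,x)\<in>T^^(h+i))" for x
    unfolding W_def level_def by auto
  have noback: "\<not> (\<exists>u v. backward_arc A T (u, v) \<and> u \<in> W \<and> v \<in> W)"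
  proof
    assume "\<exists>u v. backward_arc A T (u, v) \<and> u \<in> W \<and> v \<in> W"
    then obtain u v where uv: "(u,v)\<in>A" "(v,u)\<in>T\<^sup>*" "u\<in>W" "v\<in>W"
      unfolding backward_arc_def by auto
    obtain d where d: "(v,u)\<in>T^^d" using uv(2) rtrancl_power by blast
    obtain i where i: "i \<le> g-2" "(r,u)\<in>T^^(h+i)" using uv(3) memW by auto
    obtain j where j: "j \<le> g-2" "(r,v)\<in>T^^(h+j)" using uv(4) memW by auto
    have "(r,u)\<in>T^^(h+j+d)" using j(2) d relpow_add by blast
    then have eq: "h+i = h+j+d" using du i(2) by blast
    have ne: "u \<noteq> v" using uv(1) loopless by auto
    have "\<exists>c. is_cycle A c \<and> length c = Suc d"
      by (rule back_cycle[OF TA _ j(2) d uv(1) ne]) (rule du)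
    then obtain c where cc: "is_cycle A c" "length c = Suc d" by auto
    have "g \<le> Suc d" using gle[OF cc(1)] cc(2) by simp
    then show False using eq i(1) g2 by linarith
  qed
  have acyc: "induces_acyclic A W"
    unfolding induces_acyclic_def
  proof
    assume "\<exists>c. is_cycle A c \<and> set c \<subseteq> W"
    then obtain c where c: "is_cycle A c" "set c \<subseteq> W" by auto
    define n where "n = length c"
    have n2: "n \<ge> 2" using c(1) n_def unfolding is_cycle_def by auto
    have inF: "c!k \<in> set F" if "k < n" for k
    proof -
      have "c!k \<in> W" using c(2) that n_def by auto
      then show ?thesis using memW reach by blast
    qed
    have inc: "idx (c!k) F < idx (c!((k+1) mod n)) F" if k: "k < n" for k
    proof -
      have arc: "(c!k, c!((k+1) mod n)) \<in> A" using c(1) k n_def unfolding is_cycle_def by auto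
      have "(k+1) mod n < n" using n2 by auto
      then have W2: "c!((k+1) mod n) \<in> W" "c!k \<in> W" using c(2) k n_def by auto
      have "(c!((k+1) mod n), c!k) \<notin> T\<^sup>*"
        using noback arc W2 unfolding backward_arc_def by auto
      then show ?thesis using key arc inF[OF k] by blast
    qed
    have lin: "k < n \<Longrightarrow> idx (c!0) F + k \<le> idx (c!k) F" for k
    proof (induction k)
      case 0 then show ?case by simp
    next
      case (Suc k)
      then have "(k+1) mod n = Suc k" by simp
      then show ?case using Suc inc[of k] by auto
    qed
    have "idx (c!0) F + (n-1) \<le> idx (c!(n-1)) F" using lin[of "n-1"] n2 by simp
    moreover have "idx (c!(n-1)) F < idx (c!0) F"
      using inc[of "n-1"] n2 by auto
    ultimately show False using n2 by linarith
  qed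
  show ?thesis using acyc noback unfolding W_def g_def by blast
qed

end
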